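(* Let $(X,A,\prec)$ be an alignment of the family $\{(X_a,\prec_a)\}_{a\in I}$, let $\mathfrak{P}=\{I_1,\dots,I_p\}$ be a partition of $I$ and $X_k=\dot\bigcup_{a\in I_k}X_a$. For each $k$ let $Z_k$ be the set of nonempty sets $Q\cap X_k$, $Q\in\mathcal{C}(X,A)$ (the columns of $(X,A)[X_k]$), strictly partially ordered by $P\cap X_k\prec_k Q\cap X_k$ iff $P\prec Q$. Let $(X,A)/\mathfrak{P}$ be the graph whose vertex set is $\dot\bigcup_k Z_k$ (elements of $Z_k$ written $(k,Q\cap X_k)$) and whose edges are the pairs $\{(k,Q\cap X_k),(l,Q\cap X_l)\}$ with $k\neq l$, $Q\in\mathcal{C}(X,A)$ and both $Q\cap X_k$, $Q\cap X_l$ nonempty. Its connected components are exactly the sets $Q/\mathfrak{P}=\{(k,Q\cap X_k): Q\cap X_k\neq\emptyset\}$, $Q\in\mathcal{C}(X,A)$, in bijection with $\mathcal{C}(X,A)$; order them by $P/\mathfrak{P}\prec' Q/\mathfrak{P}$ iff $P\prec Q$. Then $((X,A)/\mathfrak{P},\prec')$ is an alignment of the family of posets $\{(Z_k,\prec_k)\}_{k=1}^p$.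
   Context: Let $I$ be a finite index set ("rows"), and for each $a\in I$ let $(X_a,\prec_a)$ be a finite set with a strict partial order. Elements of $X_a$ are written $(a,i)$, and $X=\dot\bigcup_{a\in I}X_a$. For a simple undirected graph $(X,A)$, $\mathcal{C}(X,A)$ denotes its set of connected components ("columns"). An alignment of a family of finite strict posets $(X_a,\prec_a)$ is a triple $(X,A,\prec)$ where $\prec$ is a strict partial order on $\mathcal{C}(X,A)$ such that: (P1) every $Q\in\mathcal{C}(X,A)$ induces a complete subgraph of $(X,A)$; (P2) if $(a,i)\in Q$ and $(a,j)\in Q$ then $i=j$; (P3) if $(a,i)\in P$, $(a,j)\in Q$ and $(a,i)\prec_a(a,j)$ then $P\prec Q$; (P4) if $P\prec Q$, $(a,i)\in P$ and $(a,j)\in Q$, then $(a,i)\prec_a(a,j)$ or $(a,i)$ and $(a,j)$ are incomparable w.r.t. $\prec_a$. *)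

theory Defs
  imports Main
begin

definition simple_graph :: "'v set \<Rightarrow> 'v set set \<Rightarrow> bool" where
  "simple_graph V E \<longleftrightarrow> (\<forall>e\<in>E. \<exists>x y. x \<noteq> y \<and> x \<in> V \<and> y \<in> V \<and> e = {x, y})"

definition adj :: "'v set \<Rightarrow> 'v set set \<Rightarrow> ('v \<times> 'v) set" where
  "adj V E = {(x, y). x \<in> V \<and> y \<in> V \<and> {x, y} \<in> E}"

definition components :: "'v set \<Rightarrow> 'v set set \<Rightarrow> 'v set set" where
  "components V E = {{y \<in> V. (x, y) \<in> (adj V E)\<^sup>*} | x. x \<in> V}"

definition poset_family :: "'r set \<Rightarrow> ('r \<Rightarrow> ('r \<times> 'e) set) \<Rightarrow> ('r \<Rightarrow> (('r \<times> 'e) \<times> ('r \<times> 'e)) set) \<Rightarrow> bool" where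
  "poset_family I Xs R \<longleftrightarrow> finite I \<and>
     (\<forall>a\<in>I. finite (Xs a) \<and> Xs a \<subseteq> {a} \<times> UNIV \<and> R a \<subseteq> Xs a \<times> Xs a
        \<and> (\<forall>x. (x, x) \<notin> R a) \<and> trans (R a))"

definition alignment :: "'r set \<Rightarrow> ('r \<Rightarrow> ('r \<times> 'e) set) \<Rightarrow> ('r \<Rightarrow> (('r \<times> 'e) \<times> ('r \<times> 'e)) set)
     \<Rightarrow> ('r \<times> 'e) set set \<Rightarrow> (('r \<times> 'e) set \<times> ('r \<times> 'e) set) set \<Rightarrow> bool" where
  "alignment I Xs R A prec \<longleftrightarrow>
     (let X = (\<Union>a\<in>I. Xs a); C = components X A in
       poset_family I Xs R \<and> simple_graph X A \<and>
       prec \<subseteq> C \<times> C \<and> (\<forall>Q. (Q, Q) \<notin> prec) \<and> trans prec \<and>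
       (\<forall>Q\<in>C. \<forall>x\<in>Q. \<forall>y\<in>Q. x \<noteq> y \<longrightarrow> {x, y} \<in> A) \<and>
       (\<forall>Q\<in>C. \<forall>a\<in>I. \<forall>x\<in>Xs a. \<forall>y\<in>Xs a. x \<in> Q \<and> y \<in> Q \<longrightarrow> x = y) \<and>
       (\<forall>P\<in>C. \<forall>Q\<in>C. \<forall>a\<in>I. \<forall>x\<in>Xs a. \<forall>y\<in>Xs a.
           x \<in> P \<and> y \<in> Q \<and> (x, y) \<in> R a \<longrightarrow> (P, Q) \<in> prec) \<and>
       (\<forall>P Q. (P, Q) \<in> prec \<longrightarrow> (\<forall>a\<in>I. \<forall>x\<in>Xs a. \<forall>y\<in>Xs a.
           x \<in> P \<and> y \<in> Q \<longrightarrow> (x, y) \<in> R a \<or> ((x, y) \<notin> R a \<and> (y, x) \<notin> R a))))"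

definition is_partition :: "'a set set \<Rightarrow> 'a set \<Rightarrow> bool" where
  "is_partition Part I \<longleftrightarrow> (\<forall>B\<in>Part. B \<noteq> {}) \<and> \<Union>Part = I \<and>
     (\<forall>B\<in>Part. \<forall>B'\<in>Part. B \<noteq> B' \<longrightarrow> B \<inter> B' = {})"

definition blockX :: "('a \<Rightarrow> 'v set) \<Rightarrow> 'a set \<Rightarrow> 'v set" where
  "blockX Xs B = (\<Union>a\<in>B. Xs a)"

definition quotZ :: "('a \<Rightarrow> 'v set) \<Rightarrow> 'v set set \<Rightarrow> 'a set \<Rightarrow> ('a set \<times> 'v set) set" where
  "quotZ Xs C B = {(B, Q \<inter> blockX Xs B) | Q. Q \<in> C \<and> Q \<inter> blockX Xs B \<noteq> {}}"

definition quotR :: "('a \<Rightarrow> 'v set) \<Rightarrow> 'v set set \<Rightarrow> ('v set \<times> 'v set) set \<Rightarrow> 'a set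
     \<Rightarrow> (('a set \<times> 'v set) \<times> ('a set \<times> 'v set)) set" where
  "quotR Xs C prec B = {((B, P \<inter> blockX Xs B), (B, Q \<inter> blockX Xs B)) | P Q.
      P \<in> C \<and> Q \<in> C \<and> P \<inter> blockX Xs B \<noteq> {} \<and> Q \<inter> blockX Xs B \<noteq> {} \<and> (P, Q) \<in> prec}"

definition quotE :: "('a \<Rightarrow> 'v set) \<Rightarrow> 'v set set \<Rightarrow> 'a set set \<Rightarrow> ('a set \<times> 'v set) set set" where
  "quotE Xs C Part = {{(B, Q \<inter> blockX Xs B), (B', Q \<inter> blockX Xs B')} | B B' Q.
      B \<in> Part \<and> B' \<in> Part \<and> B \<noteq> B' \<and> Q \<in> C \<and>
      Q \<inter> blockX Xs B \<noteq> {} \<and> Q \<inter> blockX Xs B' \<noteq> {}}"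

definition quotCol :: "('a \<Rightarrow> 'v set) \<Rightarrow> 'a set set \<Rightarrow> 'v set \<Rightarrow> ('a set \<times> 'v set) set" where
  "quotCol Xs Part Q = {(B, Q \<inter> blockX Xs B) | B. B \<in> Part \<and> Q \<inter> blockX Xs B \<noteq> {}}"

definition quotPrec :: "('a \<Rightarrow> 'v set) \<Rightarrow> 'a set set \<Rightarrow> ('v set \<times> 'v set) set
     \<Rightarrow> (('a set \<times> 'v set) set \<times> ('a set \<times> 'v set) set) set" where
  "quotPrec Xs Part prec = {(quotCol Xs Part P, quotCol Xs Part Q) | P Q. (P, Q) \<in> prec}"

end

theory Submission
  imports Defs
begin

lemma comp_facts:
  shows "x \<in> V \<Longrightarrow> \<exists>S\<in>components V E. x \<in> S"
    and "S \<in> components V E \<Longrightarrow> S \<subseteq> V \<and> S \<noteq> {}"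
    and "S \<in> components V E \<Longrightarrow> T \<in> components V E \<Longrightarrow> x \<in> S \<Longrightarrow> x \<in> T \<Longrightarrow> S = T"
proof -
  show "x \<in> V \<Longrightarrow> \<exists>S\<in>components V E. x \<in> S"
    unfolding components_def by blast
  show "S \<in> components V E \<Longrightarrow> S \<subseteq> V \<and> S \<noteq> {}"
    unfolding components_def by blast
  have sy: "sym ((adj V E)\<^sup>*)"
    by (rule sym_rtrancl) (auto simp: sym_def adj_def insert_commute)
  assume S: "S \<in> components V E" and T: "T \<in> components V E" and x: "x \<in> S" "x \<in> T"
  from S obtain s where s: "S = {y \<in> V. (s, y) \<in> (adj V E)\<^sup>*}" unfolding components_def by blast
  from T obtain t where t: "T = {y \<in> V. (t, y) \<in> (adj V E)\<^sup>*}" unfolding components_def by blast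
  have sx: "(s,x) \<in> (adj V E)\<^sup>*" "(t,x) \<in> (adj V E)\<^sup>*" using x s t by auto
  have "(x,t) \<in> (adj V E)\<^sup>*" using sx(2) sy by (meson symD)
  hence st: "(s,t) \<in> (adj V E)\<^sup>*" using sx(1) by (meson rtrancl_trans)
  hence ts: "(t,s) \<in> (adj V E)\<^sup>*" using sy by (meson symD)
  show "S = T" unfolding s t using st ts by (meson rtrancl_trans)
qed

lemma comp_char:
  assumes U: "\<Union>F = V" and ne: "\<And>S. S\<in>F \<Longrightarrow> S \<noteq> {}"
    and dj: "\<And>S T x. S\<in>F \<Longrightarrow> T\<in>F \<Longrightarrow> x\<in>S \<Longrightarrow> x\<in>T \<Longrightarrow> S = T"
    and cl: "\<And>S x y. S\<in>F \<Longrightarrow> x\<in>S \<Longrightarrow> y\<in>S \<Longrightarrow> x \<noteq> y \<Longrightarrow> {x,y} \<in> E"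
    and ed: "\<And>e. e\<in>E \<Longrightarrow> \<exists>S\<in>F. \<exists>x y. x\<in>S \<and> y\<in>S \<and> e = {x,y}"
  shows "components V E = F"
proof -
  have key: "{y\<in>V. (x,y)\<in>(adj V E)\<^sup>*} = S" if S: "S\<in>F" and x: "x\<in>S" for S x
  proof
    show "{y\<in>V. (x,y)\<in>(adj V E)\<^sup>*} \<subseteq> S"
    proof clarify
      fix y assume "y \<in> V" and xy: "(x,y)\<in>(adj V E)\<^sup>*"
      from xy show "y \<in> S"
      proof (induction rule: rtrancl_induct)
        case base show ?case using x .
      next
        case (step y z)
        then have "{y,z} \<in> E" by (simp add: adj_def)
        then obtain S' x' y' where S': "S'\<in>F" "x'\<in>S'" "y'\<in>S'" "{y,z} = {x',y'}" using ed by blast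
        have "y \<in> S'" "z \<in> S'" using S' by (auto simp: doubleton_eq_iff)
        then have "S' = S" using dj S' S step by blast
        then show ?case using \<open>z \<in> S'\<close> by simp
      qed
    qed
    show "S \<subseteq> {y\<in>V. (x,y)\<in>(adj V E)\<^sup>*}"
    proof
      fix y assume y: "y \<in> S"
      have yV: "y \<in> V" "x \<in> V" using U S y x by auto
      show "y \<in> {y\<in>V. (x,y)\<in>(adj V E)\<^sup>*}"
      proof (cases "x = y")
        case False
        then have "{x,y} \<in> E" using cl S x y by blast
        then have "(x,y) \<in> adj V E" using yV by (simp add: adj_def)
        then show ?thesis using yV by auto
      qed (use yV in auto)
    qed
  qed
  show ?thesis
  proof
    show "components V E \<subseteq> F"
    proof
      fix S assume "S \<in> components V E"
      then obtain x where x: "x\<in>V" "S = {y\<in>V. (x,y)\<in>(adj V E)\<^sup>*}" unfolding components_def by blast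
      then obtain T where "T\<in>F" "x\<in>T" using U by blast
      then show "S \<in> F" using key x by simp
    qed
    show "F \<subseteq> components V E"
    proof
      fix S assume S: "S\<in>F"
      then obtain x where "x\<in>S" using ne by blast
      then show "S \<in> components V E" using key[OF S] S U unfolding components_def by blast
    qed
  qed
qed

theorem lemma5:
  fixes I :: "'a set" and Xs :: "'a \<Rightarrow> ('a \<times> 'i) set"
    and R :: "'a \<Rightarrow> (('a \<times> 'i) \<times> ('a \<times> 'i)) set"
    and A :: "('a \<times> 'i) set set" and prec :: "(('a \<times> 'i) set \<times> ('a \<times> 'i) set) set"
    and Part :: "'a set set"
  assumes "alignment I Xs R A prec"
    and "is_partition Part I"
  defines "C \<equiv> components (\<Union>a\<in>I. Xs a) A"
  shows "components (\<Union>B\<in>Part. quotZ Xs C B) (quotE Xs C Part) = quotCol Xs Part ` C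
       \<and> inj_on (quotCol Xs Part) C
       \<and> alignment Part (quotZ Xs C) (quotR Xs C prec) (quotE Xs C Part) (quotPrec Xs Part prec)"
proof -
  define X where "X = (\<Union>a\<in>I. Xs a)"
  note H = assms(1)[unfolded alignment_def Let_def, folded C_def]
  have alc: "poset_family I Xs R \<and> prec \<subseteq> C \<times> C \<and> (\<forall>Q. (Q, Q) \<notin> prec) \<and> trans prec"
    using H by (elim conjE) (intro conjI; assumption)
  have al: "poset_family I Xs R" "prec \<subseteq> C \<times> C" "\<forall>Q. (Q, Q) \<notin> prec" "trans prec"
    using alc by simp_all
  have pf: "finite I" "\<And>a. a\<in>I \<Longrightarrow> finite (Xs a)" "\<And>a. a\<in>I \<Longrightarrow> Xs a \<subseteq> {a} \<times> UNIV"
    using al(1) unfolding poset_family_def by auto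
  have pt: "\<And>B. B\<in>Part \<Longrightarrow> B \<noteq> {}" "\<Union>Part = I"
    "\<And>B B'. B\<in>Part \<Longrightarrow> B'\<in>Part \<Longrightarrow> B \<noteq> B' \<Longrightarrow> B \<inter> B' = {}"
    using assms(2) unfolding is_partition_def by auto
  have CX: "Q \<subseteq> X \<and> Q \<noteq> {}" if "Q\<in>C" for Q
    using comp_facts(2)[of Q X A] that unfolding C_def X_def by simp
  have Cdj: "P = Q" if "P\<in>C" "Q\<in>C" "x\<in>P" "x\<in>Q" for P Q x
    using comp_facts(3)[of P X A Q x] that unfolding C_def X_def by simp
  have uniq: "P = Q" if "P\<in>C" "Q\<in>C" "P \<inter> blockX Xs B = Q \<inter> blockX Xs B" "P \<inter> blockX Xs B \<noteq> {}" for P Q B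
    using that Cdj by blast
  have bdj: "blockX Xs B \<inter> blockX Xs B' = {}" if "B\<in>Part" "B'\<in>Part" "B \<noteq> B'" for B B'
  proof -
    have "fst x \<in> B \<inter> B'" if xs: "x \<in> blockX Xs B" "x \<in> blockX Xs B'" for x
    proof -
      obtain a a' where "a\<in>B" "a'\<in>B'" "x\<in>Xs a" "x \<in> Xs a'" using xs unfolding blockX_def by blast
      moreover have "a\<in>I" "a'\<in>I" using pt(2) \<open>B\<in>Part\<close> \<open>B'\<in>Part\<close> calculation by auto
      ultimately show ?thesis using pf(3) by fastforce
    qed
    then show ?thesis using pt(3)[OF that] by blast
  qed
  have cover: "\<exists>B\<in>Part. Q \<inter> blockX Xs B \<noteq> {}" if hh: "Q\<in>C" for Q
  proof -
    obtain x where "x\<in>Q" using CX hh by blast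
    then obtain a where "a\<in>I" "x\<in>Xs a" using CX hh X_def by blast
    then obtain B where "B\<in>Part" "a\<in>B" using pt(2) by blast
    then show ?thesis using \<open>x\<in>Q\<close> \<open>x\<in>Xs a\<close> unfolding blockX_def by blast
  qed
  have qcI: "(B, Q \<inter> blockX Xs B) \<in> quotCol Xs Part Q" if "B\<in>Part" "Q \<inter> blockX Xs B \<noteq> {}" for B Q
    using that unfolding quotCol_def by blast
  have qcE: "\<exists>B. x = (B, Q \<inter> blockX Xs B) \<and> B\<in>Part \<and> Q \<inter> blockX Xs B \<noteq> {}" if "x \<in> quotCol Xs Part Q" for x Q
    using that unfolding quotCol_def by blast
  have inj: "inj_on (quotCol Xs Part) C"
  proof (rule inj_onI)
    fix P Q assume PQ: "P\<in>C" "Q\<in>C" "quotCol Xs Part P = quotCol Xs Part Q"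
    obtain B where B: "B\<in>Part" "P \<inter> blockX Xs B \<noteq> {}" using cover PQ by blast
    then have "(B, P \<inter> blockX Xs B) \<in> quotCol Xs Part Q" using PQ(3) qcI[OF B] by simp
    then have "P \<inter> blockX Xs B = Q \<inter> blockX Xs B" using qcE by blast
    then show "P = Q" using uniq PQ B by blast
  qed
  define V' where "V' = (\<Union>B\<in>Part. quotZ Xs C B)"
  have V'eq: "\<Union>(quotCol Xs Part ` C) = V'"
    unfolding V'_def quotZ_def quotCol_def by blast
  have qcQ: "x = y" if "x \<in> quotCol Xs Part Q" "y \<in> quotCol Xs Part Q" "fst x = fst y" for x y Q
    using qcE[OF that(1)] qcE[OF that(2)] that(3) by auto
  have edgeI: "{(B, Q \<inter> blockX Xs B), (B', Q \<inter> blockX Xs B')} \<in> quotE Xs C Part"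
    if "B\<in>Part" "B'\<in>Part" "B \<noteq> B'" "Q\<in>C" "Q \<inter> blockX Xs B \<noteq> {}" "Q \<inter> blockX Xs B' \<noteq> {}" for B B' Q
    unfolding quotE_def
    apply (rule CollectI)
    apply (rule exI[of _ B], rule exI[of _ B'], rule exI[of _ Q])
    using that by simp
  have comps: "components V' (quotE Xs C Part) = quotCol Xs Part ` C"
  proof (rule comp_char[OF V'eq])
    show "S \<noteq> {}" if "S \<in> quotCol Xs Part ` C" for S
      using that cover qcI by blast
    show "S = T" if hh: "S \<in> quotCol Xs Part ` C" "T \<in> quotCol Xs Part ` C" "x\<in>S" "x\<in>T" for S T x
    proof -
      obtain P Q where "P\<in>C" "Q\<in>C" "S = quotCol Xs Part P" "T = quotCol Xs Part Q" using hh by blast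
      note PQd = this
      obtain B1 where B1: "x = (B1, P \<inter> blockX Xs B1)" "P \<inter> blockX Xs B1 \<noteq> {}"
        using qcE[of x P] hh(3) PQd by blast
      obtain B2 where B2: "x = (B2, Q \<inter> blockX Xs B2)"
        using qcE[of x Q] hh(4) PQd by blast
      have "P \<inter> blockX Xs B1 = Q \<inter> blockX Xs B1" using B1 B2 by auto
      then have "P = Q" using uniq PQd(1,2) B1(2) by blast
      then show ?thesis using PQd by simp
    qed
    show "{x,y} \<in> quotE Xs C Part" if hh: "S \<in> quotCol Xs Part ` C" "x\<in>S" "y\<in>S" "x\<noteq>y" for S x y
    proof -
      obtain Q where Q: "Q\<in>C" "S = quotCol Xs Part Q" using hh by blast
      have "fst x \<noteq> fst y" using qcQ Q hh by blast
      have xq: "x \<in> quotCol Xs Part Q" "y \<in> quotCol Xs Part Q" using Q hh by auto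
      obtain B where "x = (B, Q \<inter> blockX Xs B)" "B\<in>Part" "Q \<inter> blockX Xs B \<noteq> {}"
        using qcE[OF xq(1)] by blast
      moreover obtain B' where "y = (B', Q \<inter> blockX Xs B')" "B'\<in>Part" "Q \<inter> blockX Xs B' \<noteq> {}"
        using qcE[OF xq(2)] by blast
      ultimately show ?thesis using Q \<open>fst x \<noteq> fst y\<close> edgeI by simp
    qed
    show "\<exists>S\<in>quotCol Xs Part ` C. \<exists>x y. x\<in>S \<and> y\<in>S \<and> e = {x,y}" if hh: "e \<in> quotE Xs C Part" for e
    proof -
      obtain B B' Q where "e = {(B, Q \<inter> blockX Xs B), (B', Q \<inter> blockX Xs B')}"
        "B \<in> Part" "B' \<in> Part" "Q \<in> C" "Q \<inter> blockX Xs B \<noteq> {}" "Q \<inter> blockX Xs B' \<noteq> {}"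
        using hh unfolding quotE_def by blast
      note h = this
      show ?thesis
        apply (rule bexI[of _ "quotCol Xs Part Q"])
         apply (rule exI[of _ "(B, Q \<inter> blockX Xs B)"], rule exI[of _ "(B', Q \<inter> blockX Xs B')"])
        using h qcI[of B Q] qcI[of B' Q] by auto
    qed
  qed
  have Pfin: "finite Part" using pt(2) pf(1) by (intro finite_subset[of Part "Pow I"]) auto
  have Xfin: "finite X" unfolding X_def using pf by auto
  have "C \<subseteq> Pow X" using CX by blast
  then have Cfin: "finite C" using Xfin by (simp add: finite_subset)
  have PF: "poset_family Part (quotZ Xs C) (quotR Xs C prec)"
    unfolding poset_family_def
  proof (intro conjI ballI allI)
    show "finite Part" by (rule Pfin)
    fix B assume B: "B \<in> Part"
    have "quotZ Xs C B \<subseteq> (\<lambda>Q. (B, Q \<inter> blockX Xs B)) ` C" unfolding quotZ_def by blast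
    then show "finite (quotZ Xs C B)" using Cfin finite_surj by blast
    show "quotZ Xs C B \<subseteq> {B} \<times> UNIV" unfolding quotZ_def by blast
    show "quotR Xs C prec B \<subseteq> quotZ Xs C B \<times> quotZ Xs C B" unfolding quotR_def quotZ_def by blast
    fix x show "(x, x) \<notin> quotR Xs C prec B"
    proof
      assume "(x, x) \<in> quotR Xs C prec B"
      then obtain P Q where "P\<in>C" "Q\<in>C" "P \<inter> blockX Xs B = Q \<inter> blockX Xs B" "P \<inter> blockX Xs B \<noteq> {}" "(P,Q)\<in>prec"
        unfolding quotR_def by auto
      then have "P = Q" using uniq by blast
      then show False using \<open>(P,Q)\<in>prec\<close> al(3) by simp
    qed
  next
    fix B assume B: "B \<in> Part"
    show "trans (quotR Xs C prec B)"
    proof (rule transI)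
      fix x y z assume xy: "(x,y) \<in> quotR Xs C prec B" and yz: "(y,z) \<in> quotR Xs C prec B"
      obtain P Q where a1: "P\<in>C" "Q\<in>C" "x = (B, P \<inter> blockX Xs B)"
        "y = (B, Q \<inter> blockX Xs B)" "P \<inter> blockX Xs B \<noteq> {}" "Q \<inter> blockX Xs B \<noteq> {}" "(P,Q)\<in>prec"
        using xy unfolding quotR_def by blast
      obtain Q' T where a2: "Q'\<in>C" "T\<in>C" "y = (B, Q' \<inter> blockX Xs B)" "z = (B, T \<inter> blockX Xs B)"
        "T \<inter> blockX Xs B \<noteq> {}" "(Q',T)\<in>prec"
        using yz unfolding quotR_def by blast
      have "Q \<inter> blockX Xs B = Q' \<inter> blockX Xs B" using a1(4) a2(3) by simp
      then have "Q = Q'" using uniq a1 a2 by blast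
      then have "(P,T) \<in> prec" using al(4) a1 a2 by (meson transD)
      then show "(x,z) \<in> quotR Xs C prec B" unfolding quotR_def using a1 a2 by blast
    qed
  qed
  have SG: "simple_graph V' (quotE Xs C Part)"
    unfolding simple_graph_def
  proof
    fix e assume "e \<in> quotE Xs C Part"
    then obtain B B' Q where h: "e = {(B, Q \<inter> blockX Xs B), (B', Q \<inter> blockX Xs B')}"
        "B \<in> Part" "B' \<in> Part" "B \<noteq> B'" "Q \<in> C" "Q \<inter> blockX Xs B \<noteq> {}" "Q \<inter> blockX Xs B' \<noteq> {}"
        unfolding quotE_def by blast
    have "(B, Q \<inter> blockX Xs B) \<in> V'" "(B', Q \<inter> blockX Xs B') \<in> V'"
      using qcI h V'eq by blast+
    then show "\<exists>x y. x \<noteq> y \<and> x \<in> V' \<and> y \<in> V' \<and> e = {x, y}"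
      using h by blast
  qed
  have PR: "quotPrec Xs Part prec \<subseteq> quotCol Xs Part ` C \<times> quotCol Xs Part ` C"
    using al(2) unfolding quotPrec_def by blast
  have IR: "\<forall>Q. (Q, Q) \<notin> quotPrec Xs Part prec"
  proof (intro allI notI)
    fix Q assume "(Q,Q) \<in> quotPrec Xs Part prec"
    then obtain P T where "(P,T)\<in>prec" "quotCol Xs Part P = quotCol Xs Part T" unfolding quotPrec_def by auto
    moreover have "P \<in> C" "T \<in> C" using calculation al(2) by auto
    ultimately have "P = T" using inj_onD[OF inj] by blast
    then show False using \<open>(P,T)\<in>prec\<close> al(3) by simp
  qed
  have TR: "trans (quotPrec Xs Part prec)"
  proof (rule transI)
    fix x y z assume xy: "(x,y) \<in> quotPrec Xs Part prec" and yz: "(y,z) \<in> quotPrec Xs Part prec"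
    obtain P Q where a1: "(P,Q)\<in>prec" "x = quotCol Xs Part P" "y = quotCol Xs Part Q"
      using xy unfolding quotPrec_def by blast
    obtain Q' T where a2: "(Q',T)\<in>prec" "y = quotCol Xs Part Q'" "z = quotCol Xs Part T"
      using yz unfolding quotPrec_def by blast
    have "Q \<in> C" "Q' \<in> C" using a1 a2 al(2) by auto
    moreover have "quotCol Xs Part Q = quotCol Xs Part Q'" using a1 a2 by simp
    ultimately have "Q = Q'" using inj_onD[OF inj] by blast
    then have "(P,T) \<in> prec" using al(4) a1 a2 by (meson transD)
    then show "(x,z) \<in> quotPrec Xs Part prec" unfolding quotPrec_def using a1 a2 by blast
  qed
  have P1: "\<forall>Q\<in>quotCol Xs Part ` C. \<forall>x\<in>Q. \<forall>y\<in>Q. x \<noteq> y \<longrightarrow> {x, y} \<in> quotE Xs C Part"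
  proof (intro ballI impI)
    fix S x y assume hh: "S \<in> quotCol Xs Part ` C" "x\<in>S" "y\<in>S" "x\<noteq>y"
    obtain Q where Q: "Q\<in>C" "S = quotCol Xs Part Q" using hh by blast
    have "fst x \<noteq> fst y" using qcQ Q hh by blast
    have xq: "x \<in> quotCol Xs Part Q" "y \<in> quotCol Xs Part Q" using Q hh by auto
    obtain B where "x = (B, Q \<inter> blockX Xs B)" "B\<in>Part" "Q \<inter> blockX Xs B \<noteq> {}"
      using qcE[OF xq(1)] by blast
    moreover obtain B' where "y = (B', Q \<inter> blockX Xs B')" "B'\<in>Part" "Q \<inter> blockX Xs B' \<noteq> {}"
      using qcE[OF xq(2)] by blast
    ultimately show "{x, y} \<in> quotE Xs C Part" using Q \<open>fst x \<noteq> fst y\<close> edgeI by simp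
  qed
  have P2: "\<forall>Q\<in>quotCol Xs Part ` C. \<forall>B\<in>Part. \<forall>x\<in>quotZ Xs C B. \<forall>y\<in>quotZ Xs C B. x \<in> Q \<and> y \<in> Q \<longrightarrow> x = y"
  proof (intro ballI impI)
    fix S B x y assume "S \<in> quotCol Xs Part ` C" "B\<in>Part" "x \<in> quotZ Xs C B" "y \<in> quotZ Xs C B" "x \<in> S \<and> y \<in> S"
    moreover have "fst x = B" "fst y = B" using calculation unfolding quotZ_def by auto
    ultimately show "x = y" using qcQ by blast
  qed
  have P3: "\<forall>P\<in>quotCol Xs Part ` C. \<forall>Q\<in>quotCol Xs Part ` C. \<forall>B\<in>Part. \<forall>x\<in>quotZ Xs C B. \<forall>y\<in>quotZ Xs C B.
           x \<in> P \<and> y \<in> Q \<and> (x, y) \<in> quotR Xs C prec B \<longrightarrow> (P, Q) \<in> quotPrec Xs Part prec"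
  proof (intro ballI impI)
    fix P' Q' B x y assume a: "P' \<in> quotCol Xs Part ` C" "Q' \<in> quotCol Xs Part ` C" "B\<in>Part"
      "x \<in> P' \<and> y \<in> Q' \<and> (x, y) \<in> quotR Xs C prec B"
    obtain P0 Q0 where PQ0: "P0\<in>C" "Q0\<in>C" "P' = quotCol Xs Part P0" "Q' = quotCol Xs Part Q0" using a by blast
    obtain P Q where PQ: "P\<in>C" "Q\<in>C" "x = (B, P \<inter> blockX Xs B)" "y = (B, Q \<inter> blockX Xs B)"
      "P \<inter> blockX Xs B \<noteq> {}" "Q \<inter> blockX Xs B \<noteq> {}" "(P,Q)\<in>prec"
      using a(4) unfolding quotR_def by blast
    obtain B1 where B1: "x = (B1, P0 \<inter> blockX Xs B1)" using qcE[of x P0] a(4) PQ0(3) by blast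
    obtain B2 where B2: "y = (B2, Q0 \<inter> blockX Xs B2)" using qcE[of y Q0] a(4) PQ0(4) by blast
    have "P \<inter> blockX Xs B = P0 \<inter> blockX Xs B" "Q \<inter> blockX Xs B = Q0 \<inter> blockX Xs B"
      using B1 B2 PQ(3,4) by auto
    then have "P = P0" "Q = Q0" using uniq PQ PQ0 by blast+
    then show "(P', Q') \<in> quotPrec Xs Part prec" using PQ0 PQ unfolding quotPrec_def by blast
  qed
  have P4: "\<forall>P Q. (P, Q) \<in> quotPrec Xs Part prec \<longrightarrow> (\<forall>B\<in>Part. \<forall>x\<in>quotZ Xs C B. \<forall>y\<in>quotZ Xs C B.
           x \<in> P \<and> y \<in> Q \<longrightarrow> (x, y) \<in> quotR Xs C prec B \<or> ((x, y) \<notin> quotR Xs C prec B \<and> (y, x) \<notin> quotR Xs C prec B))"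
  proof (intro allI impI ballI disjI1)
    fix P' Q' B x y assume a: "(P', Q') \<in> quotPrec Xs Part prec" "B\<in>Part" "x \<in> quotZ Xs C B" "y \<in> quotZ Xs C B"
      "x \<in> P' \<and> y \<in> Q'"
    obtain P Q where PQ: "(P,Q)\<in>prec" "P' = quotCol Xs Part P" "Q' = quotCol Xs Part Q"
      using a(1) unfolding quotPrec_def by blast
    have PC: "P\<in>C" "Q\<in>C" using PQ al(2) by auto
    have "fst x = B" "fst y = B" using a unfolding quotZ_def by auto
    moreover obtain B1 where B1: "x = (B1, P \<inter> blockX Xs B1)" "P \<inter> blockX Xs B1 \<noteq> {}"
      using qcE[of x P] a(5) PQ(2) by blast
    moreover obtain B2 where B2: "y = (B2, Q \<inter> blockX Xs B2)" "Q \<inter> blockX Xs B2 \<noteq> {}"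
      using qcE[of y Q] a(5) PQ(3) by blast
    ultimately have "x = (B, P \<inter> blockX Xs B)" "y = (B, Q \<inter> blockX Xs B)"
      "P \<inter> blockX Xs B \<noteq> {}" "Q \<inter> blockX Xs B \<noteq> {}" by auto
    then show "(x, y) \<in> quotR Xs C prec B" unfolding quotR_def using PC PQ by blast
  qed
  have "alignment Part (quotZ Xs C) (quotR Xs C prec) (quotE Xs C Part) (quotPrec Xs Part prec)"
    unfolding alignment_def Let_def V'_def[symmetric] comps
    by (intro conjI PF SG PR IR TR P1 P2 P3 P4)
  then show ?thesis using comps inj V'_def by simp
qed

end
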